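(* Let $\Bbbk$ be a field. If $G$ is a graph with no induced $2K_2$ that is prime over $\Bbbk$, then $\operatorname{reg}_{\Bbbk}(G)\le\frac{\delta(G)+3}{2}$, where $\delta(G)$ is the minimum degree.
   Context: $2K_2$ is the disjoint union of two edges. $\operatorname{reg}_{\Bbbk}(G)=\max\{j\ge0:\widetilde H_{j-1}(\operatorname{Ind}(G[S]);\Bbbk)\neq0\text{ for some }S\subseteq V(G)\}$, $\operatorname{Ind}$ the independence complex. A connected graph $G$ is prime over $\Bbbk$ if $\operatorname{reg}_{\Bbbk}(G-x)<\operatorname{reg}_{\Bbbk}(G)$ for every vertex $x$. *)

theory Defs
  imports Complex_Main
begin

text \<open>A simplicial complex is given as a set of finite faces K :: 'a set set (including the empty face).\<close>

definition is_chain :: "'a set set \<Rightarrow> int \<Rightarrow> ('a set \<Rightarrow> 'k::field) \<Rightarrow> bool" where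
  "is_chain K d c \<longleftrightarrow> (\<forall>\<sigma>. c \<sigma> \<noteq> 0 \<longrightarrow> \<sigma> \<in> K \<and> finite \<sigma> \<and> int (card \<sigma>) = d + 1)"

text \<open>Simplicial boundary (augmented, so the empty face is the (-1)-face):
  (bd c)(tau) = sum over v not in tau of (-1)^(number of elements of tau below v) * c(tau + v).\<close>
definition bd :: "'a::linorder set set \<Rightarrow> ('a set \<Rightarrow> 'k::field) \<Rightarrow> 'a set \<Rightarrow> 'k" where
  "bd K c \<tau> = (\<Sum>v \<in> {v. v \<notin> \<tau> \<and> insert v \<tau> \<in> K}. (-1) ^ card {u \<in> \<tau>. u < v} * c (insert v \<tau>))"

definition red_hom_nonzero :: "'k::field itself \<Rightarrow> 'a::linorder set set \<Rightarrow> int \<Rightarrow> bool" where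
  "red_hom_nonzero TYPE('k) K d \<longleftrightarrow>
     (\<exists>z :: 'a set \<Rightarrow> 'k. is_chain K d z \<and> bd K z = (\<lambda>_. 0) \<and>
        \<not> (\<exists>b :: 'a set \<Rightarrow> 'k. is_chain K (d + 1) b \<and> bd K b = z))"

definition ind_complex :: "'a set \<Rightarrow> ('a \<Rightarrow> 'a \<Rightarrow> bool) \<Rightarrow> 'a set set" where
  "ind_complex S E = {\<sigma>. \<sigma> \<subseteq> S \<and> (\<forall>u\<in>\<sigma>. \<forall>v\<in>\<sigma>. \<not> E u v)}"

definition reg :: "'k::field itself \<Rightarrow> 'a::linorder set \<Rightarrow> ('a \<Rightarrow> 'a \<Rightarrow> bool) \<Rightarrow> nat" where
  "reg TYPE('k) V E = Max {j::nat. \<exists>S \<subseteq> V. red_hom_nonzero TYPE('k) (ind_complex S E) (int j - 1)}"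

definition connected_graph :: "'a set \<Rightarrow> ('a \<Rightarrow> 'a \<Rightarrow> bool) \<Rightarrow> bool" where
  "connected_graph V E \<longleftrightarrow> V \<noteq> {} \<and>
     (\<forall>u\<in>V. \<forall>v\<in>V. (\<lambda>x y. x \<in> V \<and> y \<in> V \<and> E x y)\<^sup>*\<^sup>* u v)"

definition prime_graph :: "'k::field itself \<Rightarrow> 'a::linorder set \<Rightarrow> ('a \<Rightarrow> 'a \<Rightarrow> bool) \<Rightarrow> bool" where
  "prime_graph TYPE('k) V E \<longleftrightarrow> connected_graph V E \<and>
     (\<forall>x\<in>V. reg TYPE('k) (V - {x}) E < reg TYPE('k) V E)"

definition no_induced_2K2 :: "'a set \<Rightarrow> ('a \<Rightarrow> 'a \<Rightarrow> bool) \<Rightarrow> bool" where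
  "no_induced_2K2 V E \<longleftrightarrow> \<not> (\<exists>a\<in>V. \<exists>b\<in>V. \<exists>c\<in>V. \<exists>d\<in>V. distinct [a, b, c, d] \<and>
      E a b \<and> E c d \<and> \<not> E a c \<and> \<not> E a d \<and> \<not> E b c \<and> \<not> E b d)"

definition degree :: "'a set \<Rightarrow> ('a \<Rightarrow> 'a \<Rightarrow> bool) \<Rightarrow> 'a \<Rightarrow> nat" where
  "degree V E v = card {u \<in> V. E v u}"

definition min_degree :: "'a set \<Rightarrow> ('a \<Rightarrow> 'a \<Rightarrow> bool) \<Rightarrow> nat" where
  "min_degree V E = Min (degree V E ` V)"

end

theory Submission
  imports Defs
begin

definition sg :: "'a::linorder \<Rightarrow> 'a set \<Rightarrow> 'k::field" where
  "sg v \<tau> = (-1) ^ card {u \<in> \<tau>. u < v}"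

definition bdS :: "'a::linorder set \<Rightarrow> ('a set \<Rightarrow> 'k::field) \<Rightarrow> 'a set \<Rightarrow> 'k" where
  "bdS U c \<tau> = (\<Sum>v \<in> U - \<tau>. sg v \<tau> * c (insert v \<tau>))"

definition Cn :: "'a::linorder \<Rightarrow> ('a set \<Rightarrow> 'k::field) \<Rightarrow> 'a set \<Rightarrow> 'k" where
  "Cn a w \<tau> = (if a \<in> \<tau> then sg a (\<tau> - {a}) * w (\<tau> - {a}) else 0)"

lemma sg_sq: "(sg v \<tau> :: 'k::field) * sg v \<tau> = 1"
  by (simp add: sg_def power_add[symmetric])

lemma sg_nz: "(sg v \<tau> :: 'k::field) \<noteq> 0"
  by (simp add: sg_def)

lemma sg_swap:
  assumes "finite \<rho>" "v \<noteq> a" "v \<notin> \<rho>" "a \<notin> \<rho>"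
  shows "(sg v (insert a \<rho>) :: 'k::field) * sg a (insert v \<rho>) = - (sg a \<rho> * sg v \<rho>)"
proof (cases "a < v")
  case True
  have 1: "{u \<in> insert a \<rho>. u < v} = insert a {u \<in> \<rho>. u < v}" using True by auto
  have 2: "{u \<in> insert v \<rho>. u < a} = {u \<in> \<rho>. u < a}" using True by auto
  have c: "card (insert a {u \<in> \<rho>. u < v}) = Suc (card {u \<in> \<rho>. u < v})" using assms by auto
  have "(sg v (insert a \<rho>) :: 'k) = - sg v \<rho>" unfolding sg_def 1 c by simp
  moreover have "(sg a (insert v \<rho>) :: 'k) = sg a \<rho>" unfolding sg_def 2 by simp
  ultimately show ?thesis by simp
next
  case False
  then have lt: "v < a" using assms(2) by auto
  have 1: "{u \<in> insert a \<rho>. u < v} = {u \<in> \<rho>. u < v}" using lt by auto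
  have 2: "{u \<in> insert v \<rho>. u < a} = insert v {u \<in> \<rho>. u < a}" using lt by auto
  have c: "card (insert v {u \<in> \<rho>. u < a}) = Suc (card {u \<in> \<rho>. u < a})" using assms by auto
  have "(sg v (insert a \<rho>) :: 'k) = sg v \<rho>" unfolding sg_def 1 by simp
  moreover have "(sg a (insert v \<rho>) :: 'k) = - sg a \<rho>" unfolding sg_def 2 c by simp
  ultimately show ?thesis by simp
qed

lemma sg_swap':
  assumes "finite \<rho>" "v \<noteq> a" "v \<notin> \<rho>" "a \<notin> \<rho>"
  shows "(sg v (insert a \<rho>) :: 'k::field) * sg a (insert v \<rho>) * c = - (sg a \<rho> * sg v \<rho> * c)"
  using sg_swap[OF assms, where 'k='k] by simp

lemma bd_eq:
  assumes "finite U" "K \<subseteq> Pow U" "\<And>\<sigma>. c \<sigma> \<noteq> 0 \<Longrightarrow> \<sigma> \<in> K"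
  shows "bd K c \<tau> = bdS U c \<tau>"
proof -
  have sub: "{v. v \<notin> \<tau> \<and> insert v \<tau> \<in> K} \<subseteq> U - \<tau>" using assms(2) by auto
  show ?thesis unfolding bd_def bdS_def sg_def
    by (rule sum.mono_neutral_left[OF _ sub]) (use assms in auto)
qed

lemma bdS_add: "bdS U (\<lambda>\<sigma>. c \<sigma> + d \<sigma>) \<tau> = bdS U c \<tau> + bdS U d \<tau>"
  by (simp add: bdS_def sum.distrib algebra_simps)

lemma bdS_diff: "bdS U (\<lambda>\<sigma>. c \<sigma> - d \<sigma>) \<tau> = bdS U c \<tau> - bdS U d \<tau>"
  by (simp add: bdS_def sum_subtractf algebra_simps)

lemma bdS_zero: "bdS U (\<lambda>\<sigma>. 0) \<tau> = 0"
  by (simp add: bdS_def)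

lemma bdS_Cn_out:
  assumes "finite U" "a \<in> U" "a \<notin> \<tau>" "\<And>\<sigma>. w \<sigma> \<noteq> 0 \<Longrightarrow> a \<notin> \<sigma>"
  shows "bdS U (Cn a w) \<tau> = w \<tau>"
proof -
  have aU: "a \<in> U - \<tau>" using assms by auto
  have "bdS U (Cn a w) \<tau> = sg a \<tau> * Cn a w (insert a \<tau>) + (\<Sum>v \<in> (U - \<tau>) - {a}. sg v \<tau> * Cn a w (insert v \<tau>))"
    unfolding bdS_def using sum.remove[OF _ aU] assms(1) by auto
  also have "(\<Sum>v \<in> (U - \<tau>) - {a}. sg v \<tau> * Cn a w (insert v \<tau>)) = 0"
    using assms(3) by (intro sum.neutral) (auto simp: Cn_def)
  also have "insert a \<tau> - {a} = \<tau>" using assms(3) by auto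
  then have "Cn a w (insert a \<tau>) = sg a \<tau> * w \<tau>" by (simp add: Cn_def)
  finally show ?thesis by (simp add: mult.assoc[symmetric] sg_sq)
qed

lemma bdS_Cn_in:
  assumes "finite U" "a \<in> U" "a \<in> \<tau>" "\<And>\<sigma>. w \<sigma> \<noteq> 0 \<Longrightarrow> a \<notin> \<sigma> \<and> finite \<sigma>"
  shows "bdS U (Cn a w) \<tau> = - (sg a (\<tau> - {a}) * bdS U w (\<tau> - {a}))"
proof (cases "finite \<tau>")
  case False
  have l: "bdS U (Cn a w) \<tau> = 0" unfolding bdS_def
  proof (intro sum.neutral ballI)
    fix v assume "v \<in> U - \<tau>"
    have "infinite (insert v \<tau> - {a})" using False by simp
    then have "w (insert v \<tau> - {a}) = 0" using assms(4) by blast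
    then show "sg v \<tau> * Cn a w (insert v \<tau>) = 0" by (simp add: Cn_def)
  qed
  have r: "bdS U w (\<tau> - {a}) = 0" unfolding bdS_def
  proof (intro sum.neutral ballI)
    fix v assume "v \<in> U - (\<tau> - {a})"
    have "infinite (\<tau> - {a})" using False by simp
    then have "infinite (insert v (\<tau> - {a}))" by simp
    then have "w (insert v (\<tau> - {a})) = 0" using assms(4)[of "insert v (\<tau> - {a})"] by (metis (mono_tags))
    then show "sg v (\<tau> - {a}) * w (insert v (\<tau> - {a})) = 0" by simp
  qed
  show ?thesis using l r by simp
next
  case True
  define \<rho> where "\<rho> = \<tau> - {a}"
  have a\<rho>: "a \<notin> \<rho>" by (simp add: \<rho>_def)
  have \<tau>: "\<tau> = insert a \<rho>" using assms(3) by (auto simp: \<rho>_def)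
  have f\<rho>: "finite \<rho>" using True by (simp add: \<rho>_def)
  have U\<rho>: "U - \<rho> = insert a (U - \<tau>)" using assms(2,3) by (auto simp: \<rho>_def)
  have "bdS U w \<rho> = sg a \<rho> * w (insert a \<rho>) + (\<Sum>v \<in> U - \<tau>. sg v \<rho> * w (insert v \<rho>))"
    unfolding bdS_def U\<rho> using assms(1,3) by (subst sum.insert) auto
  also have "w (insert a \<rho>) = 0" using assms(4)[of "insert a \<rho>"] by blast
  finally have r: "bdS U w \<rho> = (\<Sum>v \<in> U - \<tau>. sg v \<rho> * w (insert v \<rho>))" by simp
  have "bdS U (Cn a w) \<tau> = (\<Sum>v \<in> U - \<tau>. sg v \<tau> * (sg a (insert v \<rho>) * w (insert v \<rho>)))"
    unfolding bdS_def
  proof (intro sum.cong refl)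
    fix v assume "v \<in> U - \<tau>"
    then have "insert v \<tau> - {a} = insert v \<rho>" "a \<in> insert v \<tau>" using \<tau> a\<rho> by auto
    then show "sg v \<tau> * Cn a w (insert v \<tau>) = sg v \<tau> * (sg a (insert v \<rho>) * w (insert v \<rho>))"
      by (simp add: Cn_def)
  qed
  also have "\<dots> = (\<Sum>v \<in> U - \<tau>. - (sg a \<rho> * (sg v \<rho> * w (insert v \<rho>))))"
  proof (intro sum.cong refl)
    fix v assume v: "v \<in> U - \<tau>"
    then have va: "v \<noteq> a" "v \<notin> \<rho>" using \<tau> by auto
    show "sg v \<tau> * (sg a (insert v \<rho>) * w (insert v \<rho>)) = - (sg a \<rho> * (sg v \<rho> * w (insert v \<rho>)))"
      using sg_swap'[OF f\<rho> va a\<rho>, of "w (insert v \<rho>)"] unfolding \<tau> by (simp only: mult.assoc)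
  qed
  also have "\<dots> = - (sg a \<rho> * bdS U w \<rho>)" unfolding r by (simp add: sum_distrib_left sum_negf)
  finally show ?thesis by (simp add: \<rho>_def)
qed

lemma decomp:
  "z \<tau> = (if a \<in> \<tau> then 0 else z \<tau>) + Cn a (\<lambda>\<sigma>. if a \<notin> \<sigma> then sg a \<sigma> * z (insert a \<sigma>) else 0) \<tau>"
proof (cases "a \<in> \<tau>")
  case True
  then have "insert a (\<tau> - {a}) = \<tau>" by auto
  then show ?thesis using True by (simp add: Cn_def mult.assoc[symmetric] sg_sq)
qed (simp add: Cn_def)


lemma IC_Pow: "ind_complex S E \<subseteq> Pow S"
  by (auto simp: ind_complex_def)

lemma chain_supp:
  assumes "is_chain (ind_complex S E) d c" "c \<sigma> \<noteq> 0"
  shows "\<sigma> \<subseteq> S \<and> finite \<sigma> \<and> (\<forall>u\<in>\<sigma>. \<forall>v\<in>\<sigma>. \<not> E u v) \<and> int (card \<sigma>) = d + 1"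
  using assms unfolding is_chain_def ind_complex_def by auto

lemma bd_IC:
  assumes "finite U" "S \<subseteq> U" "is_chain (ind_complex S E) d c"
  shows "bd (ind_complex S E) c \<tau> = bdS U c \<tau>"
proof (rule bd_eq[OF assms(1)])
  show "ind_complex S E \<subseteq> Pow U" using IC_Pow assms(2) by blast
  show "\<And>\<sigma>. c \<sigma> \<noteq> 0 \<Longrightarrow> \<sigma> \<in> ind_complex S E" using assms(3) unfolding is_chain_def by blast
qed

lemma cone:
  fixes E :: "'a::linorder \<Rightarrow> 'a \<Rightarrow> bool"
  assumes fin: "finite S" and aS: "a \<in> S" and iso: "\<forall>v\<in>S. \<not> E a v"
    and sym: "\<And>u v. E u v \<Longrightarrow> E v u"
  shows "\<not> red_hom_nonzero TYPE('k::field) (ind_complex S E) k"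
proof
  let ?K = "ind_complex S E"
  assume "red_hom_nonzero TYPE('k) ?K k"
  then obtain z :: "'a set \<Rightarrow> 'k" where zc: "is_chain ?K k z" and zb: "bd ?K z = (\<lambda>_. 0)"
    and nb: "\<not> (\<exists>b :: 'a set \<Rightarrow> 'k. is_chain ?K (k + 1) b \<and> bd ?K b = z)"
    unfolding red_hom_nonzero_def by blast
  define z1 where "z1 \<sigma> = (if a \<in> \<sigma> then 0 else z \<sigma>)" for \<sigma>
  define z2 where "z2 \<sigma> = (if a \<notin> \<sigma> then sg a \<sigma> * z (insert a \<sigma>) else 0)" for \<sigma>
  have dec: "z = (\<lambda>\<tau>. z1 \<tau> + Cn a z2 \<tau>)" unfolding z1_def z2_def by (rule ext, rule decomp)
  have zs: "z \<sigma> \<noteq> 0 \<Longrightarrow> \<sigma> \<subseteq> S \<and> finite \<sigma> \<and> (\<forall>u\<in>\<sigma>. \<forall>v\<in>\<sigma>. \<not> E u v) \<and> int (card \<sigma>) = k + 1" for \<sigma>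
    using chain_supp[OF zc] by blast
  have bdz: "bdS S z \<tau> = 0" for \<tau>
    using bd_IC[OF fin order_refl zc, of \<tau>] zb by (metis)
  have z1s: "z1 \<sigma> \<noteq> 0 \<Longrightarrow> a \<notin> \<sigma> \<and> finite \<sigma>" for \<sigma>
    using zs unfolding z1_def by (auto split: if_splits)
  have z2s: "z2 \<sigma> \<noteq> 0 \<Longrightarrow> a \<notin> \<sigma> \<and> finite \<sigma>" for \<sigma>
  proof -
    assume "z2 \<sigma> \<noteq> 0"
    then have "a \<notin> \<sigma>" "z (insert a \<sigma>) \<noteq> 0" unfolding z2_def by (auto split: if_splits)
    then show ?thesis using zs[of "insert a \<sigma>"] by auto
  qed
  define b where "b = Cn a z1"
  have bc: "is_chain ?K (k + 1) b"
    unfolding is_chain_def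
  proof (intro allI impI)
    fix \<sigma> assume h: "b \<sigma> \<noteq> 0"
    then have a\<sigma>: "a \<in> \<sigma>" and nz: "z1 (\<sigma> - {a}) \<noteq> 0" unfolding b_def Cn_def by (auto split: if_splits)
    then have nz': "z (\<sigma> - {a}) \<noteq> 0" unfolding z1_def by (auto split: if_splits)
    from zs[OF nz'] have p: "\<sigma> - {a} \<subseteq> S" "finite (\<sigma> - {a})" "\<forall>u\<in>\<sigma> - {a}. \<forall>v\<in>\<sigma> - {a}. \<not> E u v"
      "int (card (\<sigma> - {a})) = k + 1" by auto
    have eq: "\<sigma> = insert a (\<sigma> - {a})" using a\<sigma> by auto
    have "\<sigma> \<subseteq> S" using p(1) aS eq by blast
    moreover have "\<forall>u\<in>\<sigma>. \<forall>v\<in>\<sigma>. \<not> E u v"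
    proof (intro ballI)
      fix u v assume "u \<in> \<sigma>" "v \<in> \<sigma>"
      then show "\<not> E u v" using p(1,3) iso aS sym by (cases "u = a"; cases "v = a") blast+
    qed
    moreover have f\<sigma>: "finite \<sigma>" using p(2) by simp
    moreover have "int (card \<sigma>) = k + 1 + 1"
    proof -
      have "Suc (card (\<sigma> - {a})) = card \<sigma>" using card_Suc_Diff1[OF f\<sigma> a\<sigma>] .
      then show ?thesis using p(4) by linarith
    qed
    ultimately show "\<sigma> \<in> ?K \<and> finite \<sigma> \<and> int (card \<sigma>) = k + 1 + 1"
      unfolding ind_complex_def by blast
  qed
  have "bdS S b \<tau> = z \<tau>" for \<tau>
  proof (cases "a \<in> \<tau>")
    case False
    have "bdS S b \<tau> = z1 \<tau>" unfolding b_def using bdS_Cn_out[OF fin aS False] z1s by blast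
    also have "\<dots> = z \<tau>" using False by (simp add: z1_def)
    finally show ?thesis .
  next
    case True
    define \<rho> where "\<rho> = \<tau> - {a}"
    have a\<rho>: "a \<notin> \<rho>" by (simp add: \<rho>_def)
    have ins: "insert a \<rho> = \<tau>" using True by (auto simp: \<rho>_def)
    have "0 = bdS S z \<rho>" using bdz by simp
    also have "\<dots> = bdS S z1 \<rho> + bdS S (Cn a z2) \<rho>" by (subst dec) (rule bdS_add)
    also have "bdS S (Cn a z2) \<rho> = z2 \<rho>" using bdS_Cn_out[OF fin aS a\<rho>] z2s by blast
    finally have e: "bdS S z1 \<rho> = - z2 \<rho>" by (simp add: eq_neg_iff_add_eq_0)
    have "bdS S b \<tau> = - (sg a \<rho> * bdS S z1 \<rho>)" unfolding b_def \<rho>_def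
      using bdS_Cn_in[OF fin aS True] z1s by blast
    also have "\<dots> = sg a \<rho> * z2 \<rho>" using e by simp
    also have "\<dots> = z \<tau>" using a\<rho> ins by (simp add: z2_def mult.assoc[symmetric] sg_sq)
    finally show ?thesis .
  qed
  then have "bd ?K b = z" using bd_IC[OF fin order_refl bc] by (intro ext) simp
  then show False using nb bc by blast
qed


lemma IC_mono: "S' \<subseteq> S \<Longrightarrow> ind_complex S' E \<subseteq> ind_complex S E"
  by (auto simp: ind_complex_def)

lemma L:
  fixes E :: "'a::linorder \<Rightarrow> 'a \<Rightarrow> bool"
  assumes fin: "finite S" and aS: "a \<in> S" and sym: "\<And>u v. E u v \<Longrightarrow> E v u" and irr: "\<And>v. \<not> E v v"
    and h: "red_hom_nonzero TYPE('k::field) (ind_complex S E) k"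
    and n1: "\<not> red_hom_nonzero TYPE('k) (ind_complex (S - {a}) E) k"
  shows "red_hom_nonzero TYPE('k) (ind_complex (S - {a} - {v. E a v}) E) (k - 1)"
proof (rule ccontr)
  let ?K = "ind_complex S E"
  let ?K' = "ind_complex (S - {a}) E"
  let ?L = "ind_complex (S - {a} - {v. E a v}) E"
  assume n2: "\<not> red_hom_nonzero TYPE('k) ?L (k - 1)"
  from h obtain z :: "'a set \<Rightarrow> 'k" where zc: "is_chain ?K k z" and zb: "bd ?K z = (\<lambda>_. 0)"
    and nb: "\<not> (\<exists>b :: 'a set \<Rightarrow> 'k. is_chain ?K (k + 1) b \<and> bd ?K b = z)"
    unfolding red_hom_nonzero_def by blast
  define z1 where "z1 \<sigma> = (if a \<in> \<sigma> then 0 else z \<sigma>)" for \<sigma>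
  define z2 where "z2 \<sigma> = (if a \<notin> \<sigma> then sg a \<sigma> * z (insert a \<sigma>) else 0)" for \<sigma>
  have dec: "z = (\<lambda>\<tau>. z1 \<tau> + Cn a z2 \<tau>)" unfolding z1_def z2_def by (rule ext, rule decomp)
  have zs: "z \<sigma> \<noteq> 0 \<Longrightarrow> \<sigma> \<subseteq> S \<and> finite \<sigma> \<and> (\<forall>u\<in>\<sigma>. \<forall>v\<in>\<sigma>. \<not> E u v) \<and> int (card \<sigma>) = k + 1" for \<sigma>
    using chain_supp[OF zc] by blast
  have bdz: "bdS S z \<tau> = 0" for \<tau>
    using bd_IC[OF fin order_refl zc, of \<tau>] zb by (metis)
  have z1s: "z1 \<sigma> \<noteq> 0 \<Longrightarrow> a \<notin> \<sigma> \<and> finite \<sigma>" for \<sigma>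
    using zs unfolding z1_def by (auto split: if_splits)
  have z2s: "z2 \<sigma> \<noteq> 0 \<Longrightarrow> a \<notin> \<sigma> \<and> finite \<sigma>" for \<sigma>
  proof -
    assume "z2 \<sigma> \<noteq> 0"
    then have "a \<notin> \<sigma>" "z (insert a \<sigma>) \<noteq> 0" unfolding z2_def by (auto split: if_splits)
    then show ?thesis using zs[of "insert a \<sigma>"] by auto
  qed
  have Lsub: "S - {a} - {v. E a v} \<subseteq> S" by blast
  have z2c: "is_chain ?L (k - 1) z2"
    unfolding is_chain_def
  proof (intro allI impI)
    fix \<sigma> assume "z2 \<sigma> \<noteq> 0"
    then have a\<sigma>: "a \<notin> \<sigma>" and nz: "z (insert a \<sigma>) \<noteq> 0" unfolding z2_def by (auto split: if_splits)
    note pp = zs[OF nz]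
    note p = pp[THEN conjunct1] pp[THEN conjunct2, THEN conjunct1]
      pp[THEN conjunct2, THEN conjunct2, THEN conjunct1] pp[THEN conjunct2, THEN conjunct2, THEN conjunct2]
    have f: "finite \<sigma>" using p(2) by simp
    have "\<sigma> \<subseteq> S - {a} - {v. E a v}" using p(1,3) a\<sigma> by blast
    moreover have "\<forall>u\<in>\<sigma>. \<forall>v\<in>\<sigma>. \<not> E u v" using p(3) by blast
    moreover have "int (card \<sigma>) = k - 1 + 1"
    proof -
      have "card (insert a \<sigma>) = Suc (card \<sigma>)" using f a\<sigma> by simp
      then show ?thesis using p(4) by linarith
    qed
    ultimately show "\<sigma> \<in> ?L \<and> finite \<sigma> \<and> int (card \<sigma>) = k - 1 + 1"
      using f unfolding ind_complex_def by blast
  qed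
  have bdz2: "bdS S z2 \<rho> = 0" for \<rho>
  proof (cases "a \<in> \<rho>")
    case True
    show ?thesis unfolding bdS_def
      by (rule sum.neutral) (use True in \<open>simp add: z2_def\<close>)
  next
    case False
    define \<tau> where "\<tau> = insert a \<rho>"
    have a\<tau>: "a \<in> \<tau>" and r: "\<tau> - {a} = \<rho>" using False by (auto simp: \<tau>_def)
    have "0 = bdS S z \<tau>" using bdz by simp
    also have "\<dots> = bdS S z1 \<tau> + bdS S (Cn a z2) \<tau>" by (subst dec) (rule bdS_add)
    also have "bdS S z1 \<tau> = 0" unfolding bdS_def
      by (rule sum.neutral) (use a\<tau> in \<open>simp add: z1_def\<close>)
    also have "bdS S (Cn a z2) \<tau> = - (sg a \<rho> * bdS S z2 \<rho>)"
      using bdS_Cn_in[OF fin aS a\<tau>, of z2] z2s r by simp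
    finally have "sg a \<rho> * bdS S z2 \<rho> = 0" by simp
    then show ?thesis by (simp add: sg_nz)
  qed
  have "bd ?L z2 = (\<lambda>_. 0)" using bd_IC[OF fin Lsub z2c] bdz2 by (intro ext) simp
  then obtain w :: "'a set \<Rightarrow> 'k" where wc: "is_chain ?L k w" and wb: "bd ?L w = z2"
    using n2 z2c unfolding red_hom_nonzero_def by auto
  have ws: "w \<sigma> \<noteq> 0 \<Longrightarrow> \<sigma> \<subseteq> S - {a} - {v. E a v} \<and> finite \<sigma> \<and> (\<forall>u\<in>\<sigma>. \<forall>v\<in>\<sigma>. \<not> E u v) \<and> int (card \<sigma>) = k + 1" for \<sigma>
    using chain_supp[OF wc] by blast
  have ws': "w \<sigma> \<noteq> 0 \<Longrightarrow> a \<notin> \<sigma> \<and> finite \<sigma>" for \<sigma> using ws by blast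
  have bdw: "bdS S w \<tau> = z2 \<tau>" for \<tau> using bd_IC[OF fin Lsub wc, of \<tau>] wb by simp
  define C where "C = Cn a w"
  have Cc: "is_chain ?K (k + 1) C"
    unfolding is_chain_def
  proof (intro allI impI)
    fix \<sigma> assume h: "C \<sigma> \<noteq> 0"
    then have a\<sigma>: "a \<in> \<sigma>" and nz: "w (\<sigma> - {a}) \<noteq> 0" unfolding C_def Cn_def by (auto split: if_splits)
    from ws[OF nz] have p: "\<sigma> - {a} \<subseteq> S - {a} - {v. E a v}" "finite (\<sigma> - {a})" "\<forall>u\<in>\<sigma> - {a}. \<forall>v\<in>\<sigma> - {a}. \<not> E u v"
      "int (card (\<sigma> - {a})) = k + 1" by blast+
    have "\<sigma> \<subseteq> S" using p(1) aS a\<sigma> by blast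
    moreover have "\<forall>u\<in>\<sigma>. \<forall>v\<in>\<sigma>. \<not> E u v"
    proof (intro ballI)
      fix u v assume "u \<in> \<sigma>" "v \<in> \<sigma>"
      then show "\<not> E u v" using p(1,3) irr sym by (cases "u = a"; cases "v = a") blast+
    qed
    moreover have f\<sigma>: "finite \<sigma>" using p(2) by simp
    moreover have "int (card \<sigma>) = k + 1 + 1"
    proof -
      have "Suc (card (\<sigma> - {a})) = card \<sigma>" using card_Suc_Diff1[OF f\<sigma> a\<sigma>] .
      then show ?thesis using p(4) by linarith
    qed
    ultimately show "\<sigma> \<in> ?K \<and> finite \<sigma> \<and> int (card \<sigma>) = k + 1 + 1"
      unfolding ind_complex_def by blast
  qed
  have bdC: "bdS S C \<tau> = w \<tau> - Cn a z2 \<tau>" for \<tau>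
  proof (cases "a \<in> \<tau>")
    case False
    then show ?thesis unfolding C_def using bdS_Cn_out[OF fin aS False, of w] ws' by (simp add: Cn_def)
  next
    case True
    have "w \<tau> = 0" using ws' True by blast
    moreover have "bdS S C \<tau> = - (sg a (\<tau> - {a}) * bdS S w (\<tau> - {a}))"
      unfolding C_def using bdS_Cn_in[OF fin aS True, of w] ws' by blast
    ultimately show ?thesis using True bdw by (simp add: Cn_def)
  qed
  have bdCz2: "bdS S (Cn a z2) \<tau> = z2 \<tau>" for \<tau>
  proof (cases "a \<in> \<tau>")
    case False
    then show ?thesis using bdS_Cn_out[OF fin aS False, of z2] z2s by blast
  next
    case True
    have "bdS S (Cn a z2) \<tau> = - (sg a (\<tau> - {a}) * bdS S z2 (\<tau> - {a}))"
      using bdS_Cn_in[OF fin aS True, of z2] z2s by blast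
    then show ?thesis using True by (simp add: bdz2 z2_def)
  qed
  define z' where "z' \<tau> = z \<tau> + bdS S C \<tau>" for \<tau>
  have z'eq: "z' = (\<lambda>\<tau>. z \<tau> + (w \<tau> - Cn a z2 \<tau>))" unfolding z'_def bdC by simp
  have z'off: "a \<in> \<tau> \<Longrightarrow> z' \<tau> = 0" for \<tau>
  proof -
    assume a: "a \<in> \<tau>"
    have "z \<tau> = z1 \<tau> + Cn a z2 \<tau>" using dec by metis
    then have "z \<tau> = Cn a z2 \<tau>" using a by (simp add: z1_def)
    moreover have "w \<tau> = 0" using ws' a by blast
    ultimately show ?thesis unfolding z'eq by simp
  qed
  have z'c: "is_chain ?K' k z'"
    unfolding is_chain_def
  proof (intro allI impI)
    fix \<sigma> assume nz: "z' \<sigma> \<noteq> 0"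
    then have a\<sigma>: "a \<notin> \<sigma>" using z'off by blast
    then have "Cn a z2 \<sigma> = 0" by (simp add: Cn_def)
    then have "z \<sigma> \<noteq> 0 \<or> w \<sigma> \<noteq> 0" using nz unfolding z'eq by auto
    then show "\<sigma> \<in> ?K' \<and> finite \<sigma> \<and> int (card \<sigma>) = k + 1"
    proof
      assume "z \<sigma> \<noteq> 0"
      from zs[OF this] a\<sigma> show ?thesis unfolding ind_complex_def by blast
    next
      assume "w \<sigma> \<noteq> 0"
      from ws[OF this] show ?thesis unfolding ind_complex_def by blast
    qed
  qed
  have "bdS S z' \<tau> = 0" for \<tau>
  proof -
    have "bdS S z' \<tau> = bdS S z \<tau> + (bdS S w \<tau> - bdS S (Cn a z2) \<tau>)"
      unfolding z'eq bdS_add bdS_diff ..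
    then show ?thesis using bdz bdw bdCz2 by simp
  qed
  then have "bd ?K' z' = (\<lambda>_. 0)" using bd_IC[OF fin _ z'c] by (intro ext) auto
  then obtain b' :: "'a set \<Rightarrow> 'k" where b'c: "is_chain ?K' (k + 1) b'" and b'b: "bd ?K' b' = z'"
    using n1 z'c unfolding red_hom_nonzero_def by auto
  have bdb': "bdS S b' \<tau> = z' \<tau>" for \<tau> using bd_IC[OF fin _ b'c, of \<tau>] b'b by auto
  define b where "b \<sigma> = b' \<sigma> - C \<sigma>" for \<sigma>
  have bc: "is_chain ?K (k + 1) b"
    unfolding is_chain_def
  proof (intro allI impI)
    fix \<sigma> assume "b \<sigma> \<noteq> 0"
    then have "b' \<sigma> \<noteq> 0 \<or> C \<sigma> \<noteq> 0" unfolding b_def by auto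
    then show "\<sigma> \<in> ?K \<and> finite \<sigma> \<and> int (card \<sigma>) = k + 1 + 1"
    proof
      assume "b' \<sigma> \<noteq> 0"
      then show ?thesis using b'c IC_mono[of "S - {a}" S E] unfolding is_chain_def by blast
    next
      assume "C \<sigma> \<noteq> 0"
      then show ?thesis using Cc unfolding is_chain_def by blast
    qed
  qed
  have "bdS S b \<tau> = z \<tau>" for \<tau>
  proof -
    have "bdS S b \<tau> = bdS S b' \<tau> - bdS S C \<tau>" unfolding b_def by (rule bdS_diff)
    then show ?thesis using bdb' by (simp add: z'_def)
  qed
  then have "bd ?K b = z" using bd_IC[OF fin order_refl bc] by (intro ext) simp
  then show False using nb bc by blast
qed


lemma bd_zero: "bd K (\<lambda>_. 0 :: 'k::field) = (\<lambda>_. 0)"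
  by (simp add: bd_def fun_eq_iff)

lemma rhn_card:
  assumes fin: "finite S" and h: "red_hom_nonzero TYPE('k::field) (ind_complex S E) d"
  shows "d + 1 \<le> int (card S)"
proof -
  from h obtain z :: "'a set \<Rightarrow> 'k" where zc: "is_chain (ind_complex S E) d z"
    and nb: "\<not> (\<exists>b :: 'a set \<Rightarrow> 'k. is_chain (ind_complex S E) (d + 1) b \<and> bd (ind_complex S E) b = z)"
    unfolding red_hom_nonzero_def by blast
  have "z \<noteq> (\<lambda>_. 0)"
  proof
    assume "z = (\<lambda>_. 0)"
    moreover have "is_chain (ind_complex S E) (d + 1) (\<lambda>_. 0 :: 'k)" by (simp add: is_chain_def)
    ultimately show False using nb bd_zero[where 'k='k and K="ind_complex S E"] by metis
  qed
  then obtain \<sigma> where "z \<sigma> \<noteq> 0" by auto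
  from chain_supp[OF zc this] have "\<sigma> \<subseteq> S" "int (card \<sigma>) = d + 1" by auto
  moreover have "card \<sigma> \<le> card S" using card_mono[OF fin \<open>\<sigma> \<subseteq> S\<close>] .
  ultimately show ?thesis by linarith
qed

lemma rhn_empty: "red_hom_nonzero TYPE('k::field) (ind_complex {} E) (-1)"
proof -
  let ?K = "ind_complex {} E"
  have K: "?K = {{}}" by (auto simp: ind_complex_def)
  define z :: "'a set \<Rightarrow> 'k" where "z \<sigma> = (if \<sigma> = {} then 1 else 0)" for \<sigma>
  have "is_chain ?K (-1) z" by (simp add: is_chain_def z_def K)
  moreover have "bd ?K z = (\<lambda>_. 0)" by (simp add: bd_def K fun_eq_iff)
  moreover have "\<not> (\<exists>b :: 'a set \<Rightarrow> 'k. is_chain ?K (-1 + 1) b \<and> bd ?K b = z)"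
  proof
    assume "\<exists>b :: 'a set \<Rightarrow> 'k. is_chain ?K (-1 + 1) b \<and> bd ?K b = z"
    then obtain b :: "'a set \<Rightarrow> 'k" where "is_chain ?K (-1 + 1) b" "bd ?K b = z" by blast
    moreover have "bd ?K b = (\<lambda>_. 0)" by (simp add: bd_def K fun_eq_iff)
    ultimately have "z {} = 0" by metis
    then show False by (simp add: z_def)
  qed
  ultimately show ?thesis unfolding red_hom_nonzero_def by blast
qed

lemma reg_props:
  fixes V :: "'a::linorder set"
  assumes fin: "finite V"
  shows "\<exists>S\<subseteq>V. red_hom_nonzero TYPE('k::field) (ind_complex S E) (int (reg TYPE('k) V E) - 1)"
    and "S \<subseteq> V \<Longrightarrow> red_hom_nonzero TYPE('k) (ind_complex S E) (int j - 1) \<Longrightarrow> j \<le> reg TYPE('k) V E"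
proof -
  let ?R = "{j::nat. \<exists>S \<subseteq> V. red_hom_nonzero TYPE('k) (ind_complex S E) (int j - 1)}"
  have "?R \<subseteq> {..card V}"
  proof
    fix j assume "j \<in> ?R"
    then obtain S where "S \<subseteq> V" "red_hom_nonzero TYPE('k) (ind_complex S E) (int j - 1)" by blast
    moreover have "finite S" using fin \<open>S \<subseteq> V\<close> finite_subset by blast
    ultimately have "int j - 1 + 1 \<le> int (card S)" "card S \<le> card V"
      using rhn_card card_mono[OF fin] by blast+
    then show "j \<in> {..card V}" by simp
  qed
  then have finR: "finite ?R" using finite_subset by blast
  have "0 \<in> ?R" using rhn_empty[where 'k='k and E=E] by auto
  then have ne: "?R \<noteq> {}" by blast
  have "reg TYPE('k) V E \<in> ?R" unfolding reg_def using Max_in[OF finR ne] .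
  then show "\<exists>S\<subseteq>V. red_hom_nonzero TYPE('k) (ind_complex S E) (int (reg TYPE('k) V E) - 1)" by blast
  show "S \<subseteq> V \<Longrightarrow> red_hom_nonzero TYPE('k) (ind_complex S E) (int j - 1) \<Longrightarrow> j \<le> reg TYPE('k) V E"
    unfolding reg_def using Max_ge[OF finR] by blast
qed


lemma nested:
  fixes E :: "'a::linorder \<Rightarrow> 'a \<Rightarrow> bool"
  assumes sym: "\<And>u v. E u v \<Longrightarrow> E v u" and irr: "\<And>v. \<not> E v v"
    and no2: "no_induced_2K2 V E" and SV: "S \<subseteq> V"
    and Iind: "\<forall>y\<in>S - A. \<forall>w\<in>S - A. \<not> E y w"
    and Aind: "\<forall>y\<in>A. \<forall>w\<in>A. \<not> E y w" and AS: "A \<subseteq> S"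
    and a: "a \<in> A" and a': "a' \<in> A"
  shows "{v \<in> S. E a v} \<subseteq> {v \<in> S. E a' v} \<or> {v \<in> S. E a' v} \<subseteq> {v \<in> S. E a v}"
proof (rule ccontr)
  assume "\<not> ?thesis"
  then obtain b b' where b: "b \<in> S" "E a b" "\<not> E a' b" and b': "b' \<in> S" "E a' b'" "\<not> E a b'" by blast
  have bI: "b \<notin> A" using b a Aind by blast
  have b'I: "b' \<notin> A" using b' a' Aind by blast
  have aa': "\<not> E a a'" using Aind a a' by blast
  have bb': "\<not> E b b'" using Iind b b' bI b'I by blast
  have "\<not> E b a'" using b sym by blast
  have d: "distinct [a, b, a', b']"
    using a a' bI b'I b b' irr by auto
  have "a \<in> V" "b \<in> V" "a' \<in> V" "b' \<in> V" using a a' b b' AS SV by auto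
  then show False using no2 d b(2) b'(2) aa' b'(3) \<open>\<not> E b a'\<close> bb'
    unfolding no_induced_2K2_def by blast
qed

lemma M:
  fixes E :: "'a::linorder \<Rightarrow> 'a \<Rightarrow> bool"
  assumes sym: "\<And>u v. E u v \<Longrightarrow> E v u" and irr: "\<And>v. \<not> E v v"
    and no2: "no_induced_2K2 V E"
  shows "finite S \<Longrightarrow> S \<subseteq> V \<Longrightarrow> I \<subseteq> S \<Longrightarrow> (\<forall>y\<in>I. \<forall>w\<in>I. \<not> E y w) \<Longrightarrow>
    red_hom_nonzero TYPE('k::field) (ind_complex S E) k \<Longrightarrow> 2 * k \<le> int (card (S - I))"
proof (induction "card S" arbitrary: S I k rule: less_induct)
  case less
  note fin = less.prems(1) and SV = less.prems(2) and IS = less.prems(3) and Iind = less.prems(4)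
    and h = less.prems(5)
  show ?case
  proof (cases "k \<le> 0")
    case True
    then show ?thesis by simp
  next
    case False
    then have k1: "k \<ge> 1" by simp
    define A where "A = S - I"
    have finA: "finite A" using fin by (simp add: A_def)
    have rem: "2 * k \<le> int (card A)"
      if aA: "a \<in> A" and r: "red_hom_nonzero TYPE('k) (ind_complex (S - {a}) E) k" for a
    proof -
      have aS: "a \<in> S" and aI: "a \<notin> I" using aA by (auto simp: A_def)
      have "card (S - {a}) < card S" using card_Diff1_less[OF fin aS] .
      then have "2 * k \<le> int (card (S - {a} - I))"
        using less.hyps[of "S - {a}" I k] fin SV IS aI Iind r by blast
      moreover have "card (S - {a} - I) \<le> card A" unfolding A_def
        using fin by (intro card_mono) auto
      ultimately show ?thesis by linarith
    qed
    have edgeless_contra: False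
      if T: "T \<subseteq> S" and Te: "\<forall>y\<in>T. \<forall>w\<in>T. \<not> E y w"
        and r: "red_hom_nonzero TYPE('k) (ind_complex T E) (k - 1)" for T
    proof (cases "T = {}")
      case True
      then have "k - 1 + 1 \<le> 0" using rhn_card[OF _ r] by simp
      then show False using k1 by simp
    next
      case False
      then obtain t where t: "t \<in> T" by blast
      have fT: "finite T" using fin T finite_subset by blast
      have "\<not> red_hom_nonzero TYPE('k) (ind_complex T E) (k - 1)"
        by (rule cone[OF fT t]) (use Te t sym in blast)+
      then show False using r by blast
    qed
    have main: "2 * k \<le> int (card A)"
    proof (cases "\<exists>a\<in>A. \<exists>a'\<in>A. E a a'")
      case True
      then obtain a a' where aA: "a \<in> A" and a'A: "a' \<in> A" and e: "E a a'" by blast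
      have aS: "a \<in> S" using aA by (simp add: A_def)
      show ?thesis
      proof (cases "red_hom_nonzero TYPE('k) (ind_complex (S - {a}) E) k")
        case True
        then show ?thesis using rem aA by blast
      next
        case False
        define S'' where "S'' = S - {a} - {v. E a v}"
        have r: "red_hom_nonzero TYPE('k) (ind_complex S'' E) (k - 1)"
          unfolding S''_def using L[OF fin aS sym irr h False] .
        have S''S: "S'' \<subseteq> S" by (auto simp: S''_def)
        have "card S'' < card S" using fin aS S''S by (intro psubset_card_mono) (auto simp: S''_def)
        then have h1: "2 * (k - 1) \<le> int (card (S'' - I \<inter> S''))"
          using less.hyps[of S'' "I \<inter> S''" "k - 1"] fin S''S SV Iind r finite_subset by blast
        have "S'' - I \<inter> S'' \<subseteq> A - {a, a'}" using e by (auto simp: S''_def A_def)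
        then have h2: "card (S'' - I \<inter> S'') \<le> card (A - {a, a'})" using finA by (intro card_mono) auto
        have h3: "card (A - {a, a'}) + 2 = card A"
        proof -
          have "a \<noteq> a'" using irr[of a] e by metis
          then have c2: "card {a, a'} = 2" by simp
          have sub: "{a, a'} \<subseteq> A" using aA a'A by blast
          have "card (A - {a, a'}) = card A - card {a, a'}" using card_Diff_subset[OF _ sub] by simp
          moreover have "card {a, a'} \<le> card A" using card_mono[OF finA sub] .
          ultimately show ?thesis using c2 by linarith
        qed
        have "int (card (S'' - I \<inter> S'')) + 2 \<le> int (card A)" using h2 h3 by linarith
        then show ?thesis using h1 by (smt (verit))
      qed
    next
      case False
      then have Aind: "\<forall>y\<in>A. \<forall>w\<in>A. \<not> E y w" by blast
      show ?thesis
      proof (cases "A = {}")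
        case True
        then have "S \<subseteq> I" by (auto simp: A_def)
        then have Se: "\<forall>y\<in>S. \<forall>w\<in>S. \<not> E y w" using Iind by blast
        have "red_hom_nonzero TYPE('k) (ind_complex S E) (k - 1 + 1)" using h by simp
        show ?thesis
        proof (cases "S = {}")
          case True
          then show ?thesis using rhn_card[OF fin h] k1 by simp
        next
          case False
          then obtain t where "t \<in> S" by blast
          have "\<not> red_hom_nonzero TYPE('k) (ind_complex S E) k"
            by (rule cone[OF fin \<open>t \<in> S\<close>]) (use Se \<open>t \<in> S\<close> sym in blast)+
          then show ?thesis using h by blast
        qed
      next
        case False
        define N where "N x = {v \<in> S. E x v}" for x
        have "Max ((\<lambda>x. card (N x)) ` A) \<in> (\<lambda>x. card (N x)) ` A"
          using finA False by (intro Max_in) auto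
        then obtain a where aA: "a \<in> A" and amax: "Max ((\<lambda>x. card (N x)) ` A) = card (N a)"
          by blast
        have aS: "a \<in> S" using aA by (simp add: A_def)
        have nest: "N a' \<subseteq> N a" if a'A: "a' \<in> A" for a'
        proof -
          have cle: "card (N a') \<le> card (N a)"
            using Max_ge[of "(\<lambda>x. card (N x)) ` A" "card (N a')"] finA a'A amax by simp
          have fa: "finite (N a')" using fin by (auto simp: N_def)
          have or: "N a \<subseteq> N a' \<or> N a' \<subseteq> N a"
            unfolding N_def
            by (rule nested[OF sym irr no2 SV _ Aind _ aA a'A]) (use Iind in \<open>auto simp: A_def\<close>)
          show ?thesis
          proof (cases "N a' \<subseteq> N a")
            case True
            then show ?thesis .
          next
            case False
            with or have sub: "N a \<subseteq> N a'" by blast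
            have "card (N a) \<le> card (N a')" using card_mono[OF fa sub] .
            then have "card (N a) = card (N a')" using cle by linarith
            then have "N a = N a'" using card_subset_eq[OF fa sub] by blast
            then show ?thesis by blast
          qed
        qed
        show ?thesis
        proof (cases "red_hom_nonzero TYPE('k) (ind_complex (S - {a}) E) k")
          case True
          then show ?thesis using rem aA by blast
        next
          case False
          define S'' where "S'' = S - {a} - {v. E a v}"
          have r: "red_hom_nonzero TYPE('k) (ind_complex S'' E) (k - 1)"
            unfolding S''_def using L[OF fin aS sym irr h False] .
          have S''S: "S'' \<subseteq> S" by (auto simp: S''_def)
          have "\<forall>y\<in>S''. \<forall>w\<in>S''. \<not> E y w"
          proof (intro ballI notI)
            fix y w assume y: "y \<in> S''" and w: "w \<in> S''" and e: "E y w"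
            have yS: "y \<in> S" "\<not> E a y" "w \<in> S" "\<not> E a w" using y w by (auto simp: S''_def)
            show False
            proof (cases "y \<in> A")
              case True
              then have "w \<in> N a" using nest[OF True] yS e by (auto simp: N_def)
              then show False using yS by (simp add: N_def)
            next
              case False
              then have "y \<in> I" using yS(1) unfolding A_def by blast
              then have "w \<notin> I" using Iind e by blast
              then have "w \<in> A" using yS(3) unfolding A_def by blast
              then have "y \<in> N a" using nest yS sym[OF e] by (auto simp: N_def)
              then show False using yS by (simp add: N_def)
            qed
          qed
          then show ?thesis using edgeless_contra[OF S''S _ r] by blast
        qed
      qed
    qed
    then show ?thesis by (simp add: A_def)
  qed
qed


theorem mainTheorem20:
  fixes V :: "'a::linorder set" and E :: "'a \<Rightarrow> 'a \<Rightarrow> bool"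
  assumes "finite V"
    and "\<And>u v. E u v \<Longrightarrow> E v u"
    and "\<And>v. \<not> E v v"
    and "no_induced_2K2 V E"
    and "prime_graph TYPE('k::field) V E"
  shows "real (reg TYPE('k) V E) \<le> (real (min_degree V E) + 3) / 2"
proof -
  note fin = assms(1) and sym = assms(2) and irr = assms(3) and no2 = assms(4)
  define r where "r = reg TYPE('k) V E"
  define \<delta> where "\<delta> = min_degree V E"
  have conn: "connected_graph V E" and pr: "\<forall>x\<in>V. reg TYPE('k) (V - {x}) E < r"
    using assms(5) unfolding prime_graph_def r_def by auto
  have Vne: "V \<noteq> {}" using conn unfolding connected_graph_def by blast
  have "real r \<le> (real \<delta> + 3) / 2"
  proof (cases "r \<le> 1")
    case True
    then have "real r \<le> 1" by simp
    moreover have "0 \<le> real \<delta>" by simp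
    ultimately show ?thesis by (simp add: field_simps)
  next
    case False
    then have r2: "r \<ge> 2" by simp
    have small: False if x: "x \<in> V" and S: "S \<subseteq> V - {x}"
      and h: "red_hom_nonzero TYPE('k) (ind_complex S E) (int r - 1)" for x S
    proof -
      have fx: "finite (V - {x})" using fin by simp
      have "r \<le> reg TYPE('k) (V - {x}) E" using reg_props(2)[OF fx S h] .
      then show False using pr x by fastforce
    qed
    obtain S where SV: "S \<subseteq> V" and hS: "red_hom_nonzero TYPE('k) (ind_complex S E) (int r - 1)"
      using reg_props(1)[OF fin, where 'k='k and E=E] unfolding r_def by blast
    have "S = V"
    proof (rule ccontr)
      assume "S \<noteq> V"
      then obtain x where "x \<in> V" "x \<notin> S" using SV by blast
      then show False using small[of x S] SV hS by blast
    qed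
    then have hV: "red_hom_nonzero TYPE('k) (ind_complex V E) (int r - 1)" using hS by simp
    have "Min (degree V E ` V) \<in> degree V E ` V" using fin Vne by (intro Min_in) auto
    then obtain x where xV: "x \<in> V" and dx: "degree V E x = \<delta>"
      unfolding \<delta>_def min_degree_def by auto
    obtain u where uV: "u \<in> V" and xu: "E x u"
    proof -
      have "\<not> (\<forall>v\<in>V. \<not> E x v)"
      proof
        assume "\<forall>v\<in>V. \<not> E x v"
        then have "\<not> red_hom_nonzero TYPE('k) (ind_complex V E) (int r - 1)"
          by (rule cone[OF fin xV]) (use sym in blast)
        then show False using hV by blast
      qed
      then show ?thesis using that by blast
    qed
    have n1: "\<not> red_hom_nonzero TYPE('k) (ind_complex (V - {u}) E) (int r - 1)"
      using small[OF uV order_refl] by blast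
    define S'' where "S'' = V - {u} - {v. E u v}"
    have hS'': "red_hom_nonzero TYPE('k) (ind_complex S'' E) (int r - 1 - 1)"
      unfolding S''_def using L[OF fin uV sym irr hV n1] .
    define I where "I = S'' - {v. E x v}"
    have S''V: "S'' \<subseteq> V" by (auto simp: S''_def)
    have finS'': "finite S''" using fin S''V finite_subset by blast
    have Iind: "\<forall>y\<in>I. \<forall>w\<in>I. \<not> E y w"
    proof (intro ballI notI)
      fix y w assume y: "y \<in> I" and w: "w \<in> I" and e: "E y w"
      have yy: "y \<in> V" "y \<noteq> u" "\<not> E u y" "\<not> E x y" using y by (auto simp: I_def S''_def)
      have ww: "w \<in> V" "w \<noteq> u" "\<not> E u w" "\<not> E x w" using w by (auto simp: I_def S''_def)
      have "x \<noteq> u" using irr[of x] xu by metis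
      moreover have "x \<noteq> y" using sym[OF xu] yy(3) by metis
      moreover have "x \<noteq> w" using sym[OF xu] ww(3) by metis
      moreover have "y \<noteq> w" using irr[of y] e by metis
      ultimately have d: "distinct [x, u, y, w]" using yy(2) ww(2) by auto
      show False using no2 xV uV yy(1) ww(1) d xu e yy(4) ww(4) yy(3) ww(3)
        unfolding no_induced_2K2_def by blast
    qed
    have m1: "2 * (int r - 1 - 1) \<le> int (card (S'' - I))"
      by (rule M[OF sym irr no2 finS'' S''V _ Iind hS'']) (auto simp: I_def)
    moreover have "card (S'' - I) \<le> card ({v \<in> V. E x v} - {u})"
      using fin by (intro card_mono) (auto simp: I_def S''_def)
    moreover have "card ({v \<in> V. E x v} - {u}) + 1 = \<delta>"
    proof -
      have "u \<in> {v \<in> V. E x v}" using uV xu by simp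
      moreover have "finite {v \<in> V. E x v}" using fin by simp
      ultimately have "card ({v \<in> V. E x v} - {u}) + 1 = card {v \<in> V. E x v}"
        by (metis card_Suc_Diff1 Suc_eq_plus1)
      then show ?thesis using dx by (simp add: degree_def)
    qed
    ultimately have "card (S'' - I) + 1 \<le> \<delta>" by linarith
    then have "int (card (S'' - I)) + 1 \<le> int \<delta>" by linarith
    then have "2 * int r \<le> int \<delta> + 3" using m1 by (smt (verit))
    then have "2 * real r \<le> real \<delta> + 3" by linarith
    then show ?thesis by simp
  qed
  then show ?thesis by (simp add: r_def \<delta>_def)
qed

end
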